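(* If $\Gamma_G$ is population monotonic, then $G$ has no induced subgraph isomorphic to the co-banner graph.
   Context: $G=(V,E;w)$ is a finite simple graph with edge weights $w:E\to\mathbb{R}$, $w_e>0$ for all $e\in E$. The matching game on $G$ is the cooperative game $\Gamma_G=(N,\gamma)$ with player set $N=V$ and, for $S\subseteq N$, $\gamma(S)$ equal to the maximum weight of a matching in the induced subgraph $G[S]$ (so $\gamma(\emptyset)=0$). A population monotonic allocation scheme (PMAS) is a family $(\boldsymbol{x}_S)_{\emptyset\neq S\subseteq N}$ with $\boldsymbol{x}_S=(x_{S,i})_{i\in S}\in\mathbb{R}^S$ such that (efficiency) $\sum_{i\in S}x_{S,i}=\gamma(S)$ for every nonempty $S\subseteq N$, and (monotonicity) $x_{S,i}\le x_{T,i}$ whenever $\emptyset\ne S\subseteq T\subseteq N$ and $i\in S$. $\Gamma_G$ is called population monotonic if it admits a PMAS. The co-banner graph is the graph on vertices $\{1,2,3,4,5\}$ with edge set exactly $\{12,23,34,35,45\}$ (a triangle $345$ with a pendant path $3$–$2$–$1$). *)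

theory Defs
  imports Complex_Main
begin

definition simple_graph :: "'a set \<Rightarrow> 'a set set \<Rightarrow> bool" where
  "simple_graph V E \<longleftrightarrow> finite V \<and> (\<forall>e\<in>E. \<exists>u v. u \<in> V \<and> v \<in> V \<and> u \<noteq> v \<and> e = {u, v})"

definition matching_in :: "'a set set \<Rightarrow> 'a set \<Rightarrow> 'a set set \<Rightarrow> bool" where
  "matching_in E S M \<longleftrightarrow> M \<subseteq> E \<and> (\<forall>e\<in>M. e \<subseteq> S) \<and>
     (\<forall>e1\<in>M. \<forall>e2\<in>M. e1 \<noteq> e2 \<longrightarrow> e1 \<inter> e2 = {})"

definition matching_game :: "'a set set \<Rightarrow> ('a set \<Rightarrow> real) \<Rightarrow> 'a set \<Rightarrow> real" where
  "matching_game E w S = Max ((\<lambda>M. \<Sum>e\<in>M. w e) ` {M. matching_in E S M})"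

definition is_PMAS :: "'a set \<Rightarrow> ('a set \<Rightarrow> real) \<Rightarrow> ('a set \<Rightarrow> 'a \<Rightarrow> real) \<Rightarrow> bool" where
  "is_PMAS N v x \<longleftrightarrow>
     (\<forall>S. S \<subseteq> N \<and> S \<noteq> {} \<longrightarrow> (\<Sum>i\<in>S. x S i) = v S) \<and>
     (\<forall>S T i. S \<noteq> {} \<and> S \<subseteq> T \<and> T \<subseteq> N \<and> i \<in> S \<longrightarrow> x S i \<le> x T i)"

definition population_monotonic :: "'a set \<Rightarrow> ('a set \<Rightarrow> real) \<Rightarrow> bool" where
  "population_monotonic N v \<longleftrightarrow> (\<exists>x. is_PMAS N v x)"

definition cobanner_edges :: "nat set set" where
  "cobanner_edges = {{1,2},{2,3},{3,4},{3,5},{4,5}}"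

definition has_induced_cobanner :: "'a set \<Rightarrow> 'a set set \<Rightarrow> bool" where
  "has_induced_cobanner V E \<longleftrightarrow> (\<exists>f :: nat \<Rightarrow> 'a.
     inj_on f {1..5} \<and> f ` {1..5} \<subseteq> V \<and>
     (\<forall>i\<in>{1..5}. \<forall>j\<in>{1..5}. i \<noteq> j \<longrightarrow> ({f i, f j} \<in> E \<longleftrightarrow> {i, j} \<in> cobanner_edges)))"

end

theory Submission
  imports Defs
begin

lemma pair_cases3: "u \<in> {p,q,r} \<Longrightarrow> v \<in> {p,q,r} \<Longrightarrow> u \<noteq> v \<Longrightarrow> {u,v} = {p,q} \<or> {u,v} = {q,r} \<or> {u,v} = {p,r}"
  by (auto simp: insert_commute)
lemma pair_cases4: "u \<in> {p,q,r,s} \<Longrightarrow> v \<in> {p,q,r,s} \<Longrightarrow> u \<noteq> v \<Longrightarrow> {u,v} = {p,q} \<or> {u,v} = {p,r} \<or> {u,v} = {p,s} \<or> {u,v} = {q,r} \<or> {u,v} = {q,s} \<or> {u,v} = {r,s}"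
  by (auto simp: insert_commute)
lemma pair_single: "u \<noteq> v \<Longrightarrow> \<not> {u,v} \<subseteq> {y}" by auto

lemma fin_matchings:
  assumes "finite S"
  shows "finite {M. matching_in E S M}"
proof -
  have "{M. matching_in E S M} \<subseteq> Pow (Pow S)"
    unfolding matching_in_def by auto
  then show ?thesis using assms by (meson finite_Pow_iff finite_subset)
qed

lemma mg_ge:
  assumes "finite S" "matching_in E S M"
  shows "(\<Sum>e\<in>M. w e) \<le> matching_game E w S"
  unfolding matching_game_def
  using assms fin_matchings[OF assms(1)] by (intro Max_ge) auto

lemma mg_edge:
  assumes "finite S" "e \<in> E" "e \<subseteq> S"
  shows "w e \<le> matching_game E w S"
proof -
  have "matching_in E S {e}" using assms unfolding matching_in_def by auto
  from mg_ge[OF assms(1) this] show ?thesis by simp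
qed

lemma mg_le:
  assumes "finite S" "0 \<le> B"
    and edges: "\<forall>e\<in>E. e \<subseteq> S \<longrightarrow> w e \<le> B"
    and inter: "\<forall>e1\<in>E. \<forall>e2\<in>E. e1 \<subseteq> S \<longrightarrow> e2 \<subseteq> S \<longrightarrow> e1 \<inter> e2 \<noteq> {}"
  shows "matching_game E w S \<le> B"
proof -
  have ne: "{} \<in> {M. matching_in E S M}"
    by (simp add: matching_in_def)
  have bnd: "(\<Sum>e\<in>M. w e) \<le> B" if m: "matching_in E S M" for M
  proof (cases "M = {}")
    case True then show ?thesis using assms(2) by simp
  next
    case False
    then obtain e where e: "e \<in> M" by blast
    have sub: "M \<subseteq> E" "\<forall>e\<in>M. e \<subseteq> S" and dis: "\<forall>e1\<in>M. \<forall>e2\<in>M. e1 \<noteq> e2 \<longrightarrow> e1 \<inter> e2 = {}"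
      using m unfolding matching_in_def by auto
    have eE: "e \<in> E" "e \<subseteq> S" using sub e by auto
    have "M \<subseteq> {e}"
    proof
      fix e' assume e': "e' \<in> M"
      have e'E: "e' \<in> E" "e' \<subseteq> S" using sub e' by auto
      show "e' \<in> {e}"
      proof (rule ccontr)
        assume "e' \<notin> {e}"
        then have "e' \<noteq> e" by simp
        then have "e' \<inter> e = {}" using dis e e' by blast
        moreover have "e' \<inter> e \<noteq> {}" using inter e'E eE by blast
        ultimately show False by simp
      qed
    qed
    then have "M = {e}" using e by blast
    moreover have "w e \<le> B" using edges eE by blast
    ultimately show ?thesis by simp
  qed
  show ?thesis unfolding matching_game_def
  proof (rule Max.boundedI)
    show "finite ((\<lambda>M. \<Sum>e\<in>M. w e) ` {M. matching_in E S M})"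
      using fin_matchings[OF assms(1)] by blast
    show "(\<lambda>M. \<Sum>e\<in>M. w e) ` {M. matching_in E S M} \<noteq> {}" using ne by blast
    fix y assume "y \<in> (\<lambda>M. \<Sum>e\<in>M. w e) ` {M. matching_in E S M}"
    then obtain M where "matching_in E S M" "y = (\<Sum>e\<in>M. w e)" by blast
    then show "y \<le> B" using bnd by simp
  qed
qed

lemma arith_contra:
  fixes a b c dd e :: real
  assumes "a>0" "b>0" "c>0" "dd>0" "e>0"
  "a \<le> p12_1 + p12_2" "b \<le> p23_2 + p23_3" "c \<le> p34_3+p34_4" "dd \<le> p35_3+p35_5" "e \<le> p45_4+p45_5" "p1 = 0"
  "q1+q2+q3 \<le> max a b" "r2+r3+r4 \<le> max b c" "s2+s3+s5 \<le> max b dd" "t1+t3+t4+t5 \<le> max c (max dd e)"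
  "p1 \<le> t1" "p12_1 \<le> q1" "p12_2 \<le> q2" "p23_3 \<le> q3" "p23_2 \<le> r2" "p23_3 \<le> r3" "p23_2 \<le> s2" "p23_3 \<le> s3"
  "p34_3 \<le> r3" "p34_4 \<le> r4" "p34_3 \<le> t3" "p35_3 \<le> s3" "p35_5 \<le> s5" "p35_3 \<le> t3" "p45_4 \<le> t4" "p45_5 \<le> t5"
  shows False
  using assms by (auto simp: max_def split: if_splits)

theorem mainTheorem11:
  fixes V :: "'a set" and E :: "'a set set" and w :: "'a set \<Rightarrow> real"
  assumes "simple_graph V E"
    and "\<forall>e\<in>E. w e > 0"
    and "population_monotonic V (matching_game E w)"
  shows "\<not> has_induced_cobanner V E"
proof
  assume "has_induced_cobanner V E"
  then obtain f :: "nat \<Rightarrow> 'a" where inj: "inj_on f {1..5}" and fV: "f ` {1..5} \<subseteq> V"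
    and ind: "\<forall>i\<in>{1..5}. \<forall>j\<in>{1..5}. i \<noteq> j \<longrightarrow> ({f i, f j} \<in> E \<longleftrightarrow> {i, j} \<in> cobanner_edges)"
    unfolding has_induced_cobanner_def by blast
  from assms(3) obtain x where "is_PMAS V (matching_game E w) x"
    unfolding population_monotonic_def by blast
  then have eff: "\<And>S. S \<subseteq> V \<Longrightarrow> S \<noteq> {} \<Longrightarrow> (\<Sum>i\<in>S. x S i) = matching_game E w S"
    and mono: "\<And>S T i. S \<noteq> {} \<Longrightarrow> S \<subseteq> T \<Longrightarrow> T \<subseteq> V \<Longrightarrow> i \<in> S \<Longrightarrow> x S i \<le> x T i"
    unfolding is_PMAS_def by blast+
  have finV: "finite V" using assms(1) unfolding simple_graph_def by blast
  have sg: "\<And>e. e \<in> E \<Longrightarrow> \<exists>u v. u \<noteq> v \<and> e = {u, v}"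
    using assms(1) unfolding simple_graph_def by blast
  have V: "f 1 \<in> V" "f 2 \<in> V" "f 3 \<in> V" "f 4 \<in> V" "f 5 \<in> V" using fV by auto
  have d: "f 1 \<noteq> f 2" "f 1 \<noteq> f 3" "f 1 \<noteq> f 4" "f 1 \<noteq> f 5" "f 2 \<noteq> f 3"
     "f 2 \<noteq> f 4" "f 2 \<noteq> f 5" "f 3 \<noteq> f 4" "f 3 \<noteq> f 5" "f 4 \<noteq> f 5"
    using inj_onD[OF inj, of 1 2] inj_onD[OF inj, of 1 3] inj_onD[OF inj, of 1 4] inj_onD[OF inj, of 1 5]
      inj_onD[OF inj, of 2 3] inj_onD[OF inj, of 2 4] inj_onD[OF inj, of 2 5]
      inj_onD[OF inj, of 3 4] inj_onD[OF inj, of 3 5] inj_onD[OF inj, of 4 5] by auto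
  have ie: "\<And>i j. i \<in> {1..5} \<Longrightarrow> j \<in> {1..5} \<Longrightarrow> i \<noteq> j \<Longrightarrow> ({f i, f j} \<in> E \<longleftrightarrow> {i, j} \<in> cobanner_edges)"
    using ind by blast
  have E12: "{f 1, f 2} \<in> E" using ie[of 1 2] by (simp add: cobanner_edges_def)
  have E23: "{f 2, f 3} \<in> E" using ie[of 2 3] by (simp add: cobanner_edges_def)
  have E34: "{f 3, f 4} \<in> E" using ie[of 3 4] by (simp add: cobanner_edges_def)
  have E35: "{f 3, f 5} \<in> E" using ie[of 3 5] by (simp add: cobanner_edges_def)
  have E45: "{f 4, f 5} \<in> E" using ie[of 4 5] by (simp add: cobanner_edges_def)
  have N13: "{f 1, f 3} \<notin> E" using ie[of 1 3] by (simp add: cobanner_edges_def doubleton_eq_iff)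
  have N14: "{f 1, f 4} \<notin> E" using ie[of 1 4] by (simp add: cobanner_edges_def doubleton_eq_iff)
  have N15: "{f 1, f 5} \<notin> E" using ie[of 1 5] by (simp add: cobanner_edges_def doubleton_eq_iff)
  have N24: "{f 2, f 4} \<notin> E" using ie[of 2 4] by (simp add: cobanner_edges_def doubleton_eq_iff)
  have N25: "{f 2, f 5} \<notin> E" using ie[of 2 5] by (simp add: cobanner_edges_def doubleton_eq_iff)
  define a where "a = w {f 1, f 2}"
  define b where "b = w {f 2, f 3}"
  define c where "c = w {f 3, f 4}"
  define dd where "dd = w {f 3, f 5}"
  define e where "e = w {f 4, f 5}"
  have pos: "a > 0" "b > 0" "c > 0" "dd > 0" "e > 0"
    using assms(2) E12 E23 E34 E35 E45 unfolding a_def b_def c_def dd_def e_def by auto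
  let ?G = "matching_game E w"
  have fin: "\<And>S. S \<subseteq> V \<Longrightarrow> finite S" using finV finite_subset by blast
  have g12: "x {f 1, f 2} (f 1) + x {f 1, f 2} (f 2) \<ge> a"
    using eff[of "{f 1, f 2}"] mg_edge[OF fin[of "{f 1, f 2}"] E12] V d unfolding a_def by auto
  have g23: "x {f 2, f 3} (f 2) + x {f 2, f 3} (f 3) \<ge> b"
    using eff[of "{f 2, f 3}"] mg_edge[OF fin[of "{f 2, f 3}"] E23] V d unfolding b_def by auto
  have g34: "x {f 3, f 4} (f 3) + x {f 3, f 4} (f 4) \<ge> c"
    using eff[of "{f 3, f 4}"] mg_edge[OF fin[of "{f 3, f 4}"] E34] V d unfolding c_def by auto
  have g35: "x {f 3, f 5} (f 3) + x {f 3, f 5} (f 5) \<ge> dd"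
    using eff[of "{f 3, f 5}"] mg_edge[OF fin[of "{f 3, f 5}"] E35] V d unfolding dd_def by auto
  have g45: "x {f 4, f 5} (f 4) + x {f 4, f 5} (f 5) \<ge> e"
    using eff[of "{f 4, f 5}"] mg_edge[OF fin[of "{f 4, f 5}"] E45] V d unfolding e_def by auto
  have "?G {f 1} \<le> 0"
  proof (rule mg_le)
    have "\<not> ee \<subseteq> {f 1}" if "ee \<in> E" for ee using sg[OF that] pair_single by metis
    then show "\<forall>e\<in>E. e \<subseteq> {f 1} \<longrightarrow> w e \<le> 0"
      "\<forall>e1\<in>E. \<forall>e2\<in>E. e1 \<subseteq> {f 1} \<longrightarrow> e2 \<subseteq> {f 1} \<longrightarrow> e1 \<inter> e2 \<noteq> {}" by blast+
  qed (use V fin in auto)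
  moreover have "0 \<le> ?G {f 1}" using mg_ge[of "{f 1}" E "{}" w] unfolding matching_in_def by simp
  ultimately have g1: "x {f 1} (f 1) = 0" using eff[of "{f 1}"] V by auto
  have e123: "\<And>ee. ee \<in> E \<Longrightarrow> ee \<subseteq> {f 1, f 2, f 3} \<Longrightarrow> ee = {f 1, f 2} \<or> ee = {f 2, f 3}"
  proof -
    fix ee assume "ee \<in> E" "ee \<subseteq> {f 1, f 2, f 3}"
    then obtain u v where "u \<noteq> v" "ee = {u, v}" "u \<in> {f 1, f 2, f 3}" "v \<in> {f 1, f 2, f 3}" "{u,v} \<in> E"
      using sg by blast
    then show "ee = {f 1, f 2} \<or> ee = {f 2, f 3}" using N13 pair_cases3[of u "f 1" "f 2" "f 3" v] by metis
  qed
  have "?G {f 1, f 2, f 3} \<le> max a b"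
  proof (rule mg_le)
    show "\<forall>ee\<in>E. ee \<subseteq> {f 1, f 2, f 3} \<longrightarrow> w ee \<le> max a b"
    proof (intro ballI impI)
      fix ee assume h1: "ee \<in> E" and h2: "ee \<subseteq> {f 1, f 2, f 3}"
      from e123[OF h1 h2] show "w ee \<le> max a b" unfolding a_def b_def c_def dd_def e_def by (elim disjE) auto
    qed
    show "\<forall>e1\<in>E. \<forall>e2\<in>E. e1 \<subseteq> {f 1, f 2, f 3} \<longrightarrow> e2 \<subseteq> {f 1, f 2, f 3} \<longrightarrow> e1 \<inter> e2 \<noteq> {}"
    proof (intro ballI impI)
      fix e1 e2 assume "e1 \<in> E" "e2 \<in> E" "e1 \<subseteq> {f 1, f 2, f 3}" "e2 \<subseteq> {f 1, f 2, f 3}"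
      then have "f 2 \<in> e1" "f 2 \<in> e2" using e123 by blast+
      then show "e1 \<inter> e2 \<noteq> {}" by blast
    qed
  qed (use V fin pos in auto)
  then have g123: "x {f 1, f 2, f 3} (f 1) + x {f 1, f 2, f 3} (f 2) + x {f 1, f 2, f 3} (f 3) \<le> max a b"
    using eff[of "{f 1, f 2, f 3}"] V d by (auto simp: add.assoc)
  have e234: "\<And>ee. ee \<in> E \<Longrightarrow> ee \<subseteq> {f 2, f 3, f 4} \<Longrightarrow> ee = {f 2, f 3} \<or> ee = {f 3, f 4}"
  proof -
    fix ee assume "ee \<in> E" "ee \<subseteq> {f 2, f 3, f 4}"
    then obtain u v where "u \<noteq> v" "ee = {u, v}" "u \<in> {f 2, f 3, f 4}" "v \<in> {f 2, f 3, f 4}" "{u,v} \<in> E"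
      using sg by blast
    then show "ee = {f 2, f 3} \<or> ee = {f 3, f 4}" using N24 pair_cases3[of u "f 2" "f 3" "f 4" v] by metis
  qed
  have "?G {f 2, f 3, f 4} \<le> max b c"
  proof (rule mg_le)
    show "\<forall>ee\<in>E. ee \<subseteq> {f 2, f 3, f 4} \<longrightarrow> w ee \<le> max b c"
    proof (intro ballI impI)
      fix ee assume h1: "ee \<in> E" and h2: "ee \<subseteq> {f 2, f 3, f 4}"
      from e234[OF h1 h2] show "w ee \<le> max b c" unfolding a_def b_def c_def dd_def e_def by (elim disjE) auto
    qed
    show "\<forall>e1\<in>E. \<forall>e2\<in>E. e1 \<subseteq> {f 2, f 3, f 4} \<longrightarrow> e2 \<subseteq> {f 2, f 3, f 4} \<longrightarrow> e1 \<inter> e2 \<noteq> {}"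
    proof (intro ballI impI)
      fix e1 e2 assume "e1 \<in> E" "e2 \<in> E" "e1 \<subseteq> {f 2, f 3, f 4}" "e2 \<subseteq> {f 2, f 3, f 4}"
      then have "f 3 \<in> e1" "f 3 \<in> e2" using e234 by blast+
      then show "e1 \<inter> e2 \<noteq> {}" by blast
    qed
  qed (use V fin pos in auto)
  then have g234: "x {f 2, f 3, f 4} (f 2) + x {f 2, f 3, f 4} (f 3) + x {f 2, f 3, f 4} (f 4) \<le> max b c"
    using eff[of "{f 2, f 3, f 4}"] V d by (auto simp: add.assoc)
  have e235: "\<And>ee. ee \<in> E \<Longrightarrow> ee \<subseteq> {f 2, f 3, f 5} \<Longrightarrow> ee = {f 2, f 3} \<or> ee = {f 3, f 5}"
  proof -
    fix ee assume "ee \<in> E" "ee \<subseteq> {f 2, f 3, f 5}"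
    then obtain u v where "u \<noteq> v" "ee = {u, v}" "u \<in> {f 2, f 3, f 5}" "v \<in> {f 2, f 3, f 5}" "{u,v} \<in> E"
      using sg by blast
    then show "ee = {f 2, f 3} \<or> ee = {f 3, f 5}" using N25 pair_cases3[of u "f 2" "f 3" "f 5" v] by metis
  qed
  have "?G {f 2, f 3, f 5} \<le> max b dd"
  proof (rule mg_le)
    show "\<forall>ee\<in>E. ee \<subseteq> {f 2, f 3, f 5} \<longrightarrow> w ee \<le> max b dd"
    proof (intro ballI impI)
      fix ee assume h1: "ee \<in> E" and h2: "ee \<subseteq> {f 2, f 3, f 5}"
      from e235[OF h1 h2] show "w ee \<le> max b dd" unfolding a_def b_def c_def dd_def e_def by (elim disjE) auto
    qed
    show "\<forall>e1\<in>E. \<forall>e2\<in>E. e1 \<subseteq> {f 2, f 3, f 5} \<longrightarrow> e2 \<subseteq> {f 2, f 3, f 5} \<longrightarrow> e1 \<inter> e2 \<noteq> {}"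
    proof (intro ballI impI)
      fix e1 e2 assume "e1 \<in> E" "e2 \<in> E" "e1 \<subseteq> {f 2, f 3, f 5}" "e2 \<subseteq> {f 2, f 3, f 5}"
      then have "f 3 \<in> e1" "f 3 \<in> e2" using e235 by blast+
      then show "e1 \<inter> e2 \<noteq> {}" by blast
    qed
  qed (use V fin pos in auto)
  then have g235: "x {f 2, f 3, f 5} (f 2) + x {f 2, f 3, f 5} (f 3) + x {f 2, f 3, f 5} (f 5) \<le> max b dd"
    using eff[of "{f 2, f 3, f 5}"] V d by (auto simp: add.assoc)
  have e1345: "\<And>ee. ee \<in> E \<Longrightarrow> ee \<subseteq> {f 1, f 3, f 4, f 5} \<Longrightarrow> ee = {f 3, f 4} \<or> ee = {f 3, f 5} \<or> ee = {f 4, f 5}"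
  proof -
    fix ee assume "ee \<in> E" "ee \<subseteq> {f 1, f 3, f 4, f 5}"
    then obtain u v where "u \<noteq> v" "ee = {u, v}" "u \<in> {f 1, f 3, f 4, f 5}" "v \<in> {f 1, f 3, f 4, f 5}" "{u,v} \<in> E"
      using sg by blast
    then show "ee = {f 3, f 4} \<or> ee = {f 3, f 5} \<or> ee = {f 4, f 5}" using N13 N14 N15 pair_cases4[of u "f 1" "f 3" "f 4" "f 5" v] by metis
  qed
  have "?G {f 1, f 3, f 4, f 5} \<le> max c (max dd e)"
  proof (rule mg_le)
    show "\<forall>ee\<in>E. ee \<subseteq> {f 1, f 3, f 4, f 5} \<longrightarrow> w ee \<le> max c (max dd e)"
    proof (intro ballI impI)
      fix ee assume h1: "ee \<in> E" and h2: "ee \<subseteq> {f 1, f 3, f 4, f 5}"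
      from e1345[OF h1 h2] show "w ee \<le> max c (max dd e)" unfolding a_def b_def c_def dd_def e_def by (elim disjE) auto
    qed
    show "\<forall>e1\<in>E. \<forall>e2\<in>E. e1 \<subseteq> {f 1, f 3, f 4, f 5} \<longrightarrow> e2 \<subseteq> {f 1, f 3, f 4, f 5} \<longrightarrow> e1 \<inter> e2 \<noteq> {}"
    proof (intro ballI impI)
      fix e1 e2 assume "e1 \<in> E" "e2 \<in> E" "e1 \<subseteq> {f 1, f 3, f 4, f 5}" "e2 \<subseteq> {f 1, f 3, f 4, f 5}"
      then have "e1 = {f 3, f 4} \<or> e1 = {f 3, f 5} \<or> e1 = {f 4, f 5}"
        "e2 = {f 3, f 4} \<or> e2 = {f 3, f 5} \<or> e2 = {f 4, f 5}" using e1345 by blast+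
      then show "e1 \<inter> e2 \<noteq> {}" by (elim disjE) auto
    qed
  qed (use V fin pos in auto)
  then have g1345: "x {f 1, f 3, f 4, f 5} (f 1) + x {f 1, f 3, f 4, f 5} (f 3) + x {f 1, f 3, f 4, f 5} (f 4) + x {f 1, f 3, f 4, f 5} (f 5) \<le> max c (max dd e)"
    using eff[of "{f 1, f 3, f 4, f 5}"] V d by (auto simp: add.assoc)
  have m1: "x {f 1} (f 1) \<le> x {f 1, f 3, f 4, f 5} (f 1)" by (rule mono) (use V in auto)
  have m2: "x {f 1, f 2} (f 1) \<le> x {f 1, f 2, f 3} (f 1)" by (rule mono) (use V in auto)
  have m3: "x {f 1, f 2} (f 2) \<le> x {f 1, f 2, f 3} (f 2)" by (rule mono) (use V in auto)
  have m4: "x {f 2, f 3} (f 3) \<le> x {f 1, f 2, f 3} (f 3)" by (rule mono) (use V in auto)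
  have m5: "x {f 2, f 3} (f 2) \<le> x {f 2, f 3, f 4} (f 2)" by (rule mono) (use V in auto)
  have m6: "x {f 2, f 3} (f 3) \<le> x {f 2, f 3, f 4} (f 3)" by (rule mono) (use V in auto)
  have m7: "x {f 2, f 3} (f 2) \<le> x {f 2, f 3, f 5} (f 2)" by (rule mono) (use V in auto)
  have m8: "x {f 2, f 3} (f 3) \<le> x {f 2, f 3, f 5} (f 3)" by (rule mono) (use V in auto)
  have m9: "x {f 3, f 4} (f 3) \<le> x {f 2, f 3, f 4} (f 3)" by (rule mono) (use V in auto)
  have m10: "x {f 3, f 4} (f 4) \<le> x {f 2, f 3, f 4} (f 4)" by (rule mono) (use V in auto)
  have m11: "x {f 3, f 4} (f 3) \<le> x {f 1, f 3, f 4, f 5} (f 3)" by (rule mono) (use V in auto)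
  have m12: "x {f 3, f 5} (f 3) \<le> x {f 2, f 3, f 5} (f 3)" by (rule mono) (use V in auto)
  have m13: "x {f 3, f 5} (f 5) \<le> x {f 2, f 3, f 5} (f 5)" by (rule mono) (use V in auto)
  have m14: "x {f 3, f 5} (f 3) \<le> x {f 1, f 3, f 4, f 5} (f 3)" by (rule mono) (use V in auto)
  have m15: "x {f 4, f 5} (f 4) \<le> x {f 1, f 3, f 4, f 5} (f 4)" by (rule mono) (use V in auto)
  have m16: "x {f 4, f 5} (f 5) \<le> x {f 1, f 3, f 4, f 5} (f 5)" by (rule mono) (use V in auto)
  show False
    by (rule arith_contra[OF pos g12 g23 g34 g35 g45 g1 g123 g234 g235 g1345 m1 m2 m3 m4 m5 m6 m7 m8 m9 m10 m11 m12 m13 m14 m15 m16])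
qed

end
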